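(* Let $d\ge1$ and let $\tau$ be a (closed) simplex in $\mathbb{R}^d$. Then the characteristic function $\chi_\tau$ of $\tau$ can be written as a function in $\mathrm{HNN}_k$ with $k\sim\mathcal O(\lceil\log_2(d+1)\rceil)$ and size $s\sim\mathcal O(2(d+1))$.
   Context: $\mathrm{HNN}_k$ denotes the class of functions $f:\mathbb{R}^d\to\mathbb{R}$ of the form $f(x)=\Theta^k\circ\sigma\circ\Theta^{k-1}\circ\sigma\circ\cdots\circ\Theta^1\circ\sigma_s\circ\Theta^0(x)$, where $\Theta^j:\mathbb{R}^{n_j}\to\mathbb{R}^{n_{j+1}}$ are affine maps, $n_0=d$, $n_{k+1}=1$, $\sigma=\mathrm{ReLU}$ and $\sigma_s=H$ is the Heaviside step function ($H(t)=1$ for $t\ge0$, $H(t)=0$ for $t<0$), each activation applied componentwise. $k$ is the number of hidden layers and the size of the network is $s=\sum_{0\le i\le k}n_i$. *)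

theory Defs
  imports Complex_Main
begin

text \<open>Points of R^d are represented as functions nat => real that vanish at all
  coordinates j >= d (so that the dimension d can vary inside statements).\<close>

definition in_Rd :: "nat \<Rightarrow> (nat \<Rightarrow> real) \<Rightarrow> bool" where
  "in_Rd d x \<longleftrightarrow> (\<forall>j\<ge>d. x j = 0)"

definition heaviside :: "real \<Rightarrow> real" where
  "heaviside t = (if t \<ge> 0 then 1 else 0)"

definition relu :: "real \<Rightarrow> real" where
  "relu t = max 0 t"

definition affmap :: "nat \<Rightarrow> nat \<Rightarrow> (nat \<Rightarrow> nat \<Rightarrow> real) \<Rightarrow> (nat \<Rightarrow> real)
    \<Rightarrow> (nat \<Rightarrow> real) \<Rightarrow> (nat \<Rightarrow> real)" where
  "affmap m n W b x = (\<lambda>i. if i < n then (\<Sum>l<m. W i l * x l) + b i else 0)"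

definition act :: "(real \<Rightarrow> real) \<Rightarrow> nat \<Rightarrow> (nat \<Rightarrow> real) \<Rightarrow> (nat \<Rightarrow> real)" where
  "act g n y = (\<lambda>i. if i < n then g (y i) else 0)"

fun hnn_hidden :: "(nat \<Rightarrow> nat) \<Rightarrow> (nat \<Rightarrow> nat \<Rightarrow> nat \<Rightarrow> real) \<Rightarrow> (nat \<Rightarrow> nat \<Rightarrow> real)
    \<Rightarrow> nat \<Rightarrow> (nat \<Rightarrow> real) \<Rightarrow> (nat \<Rightarrow> real)" where
  "hnn_hidden ns W B 0 x = x"
| "hnn_hidden ns W B (Suc 0) x =
     act heaviside (ns 1) (affmap (ns 0) (ns 1) (W 0) (B 0) x)"
| "hnn_hidden ns W B (Suc (Suc j)) x =
     act relu (ns (Suc (Suc j)))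
       (affmap (ns (Suc j)) (ns (Suc (Suc j))) (W (Suc j)) (B (Suc j)) (hnn_hidden ns W B (Suc j) x))"

definition hnn_eval :: "(nat \<Rightarrow> nat) \<Rightarrow> (nat \<Rightarrow> nat \<Rightarrow> nat \<Rightarrow> real) \<Rightarrow> (nat \<Rightarrow> nat \<Rightarrow> real)
    \<Rightarrow> nat \<Rightarrow> (nat \<Rightarrow> real) \<Rightarrow> real" where
  "hnn_eval ns W B k x = affmap (ns k) 1 (W k) (B k) (hnn_hidden ns W B k x) 0"

definition HNN :: "nat \<Rightarrow> nat \<Rightarrow> nat \<Rightarrow> ((nat \<Rightarrow> real) \<Rightarrow> real) \<Rightarrow> bool" where
  "HNN d k s f \<longleftrightarrow> k \<ge> 1 \<and>
     (\<exists>ns W B. ns 0 = d \<and> ns (Suc k) = 1 \<and> (\<Sum>i\<le>k. ns i) = s \<and>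
        (\<forall>x. in_Rd d x \<longrightarrow> f x = hnn_eval ns W B k x))"

text \<open>tau is a (closed, d-dimensional) simplex in R^d: the convex hull of d+1
  affinely independent points v_0,...,v_d.\<close>
definition is_simplex :: "nat \<Rightarrow> (nat \<Rightarrow> real) set \<Rightarrow> bool" where
  "is_simplex d \<tau> \<longleftrightarrow> (\<exists>v :: nat \<Rightarrow> nat \<Rightarrow> real.
     (\<forall>i\<le>d. in_Rd d (v i)) \<and>
     (\<forall>c :: nat \<Rightarrow> real. (\<Sum>i\<le>d. c i) = 0 \<and> (\<forall>j<d. (\<Sum>i\<le>d. c i * v i j) = 0)
          \<longrightarrow> (\<forall>i\<le>d. c i = 0)) \<and>
     \<tau> = {x. in_Rd d x \<and> (\<exists>lam :: nat \<Rightarrow> real. (\<forall>i\<le>d. lam i \<ge> 0) \<and> (\<Sum>i\<le>d. lam i) = 1 \<and>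
                 (\<forall>j<d. x j = (\<Sum>i\<le>d. lam i * v i j)))})"

definition charfun :: "'a set \<Rightarrow> 'a \<Rightarrow> real" where
  "charfun A x = (if x \<in> A then 1 else 0)"

end

theory Submission
  imports Defs "Jordan_Normal_Form.Determinant"
begin

lemma relu_sum_ind:
  fixes h :: "nat \<Rightarrow> real"
  assumes h01: "\<And>i. i < Suc d \<Longrightarrow> h i = 0 \<or> h i = 1"
  shows "relu ((\<Sum>i<Suc d. h i) - real d) = (if \<forall>i<Suc d. h i = 1 then 1 else 0)"
proof (cases "\<forall>i<Suc d. h i = 1")
  case True
  then have "(\<Sum>i<Suc d. h i) = (\<Sum>i<Suc d. (1::real))" by (intro sum.cong) auto
  then show ?thesis using True by (simp add: relu_def)
next
  case False
  then obtain i0 where i0: "i0 < Suc d" "h i0 = 0" using h01 by blast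
  have "(\<Sum>i<Suc d. 1 - h i) \<ge> 1 - h i0"
    by (rule member_le_sum) (use i0 h01 in force)+
  then have "(\<Sum>i<Suc d. (1::real)) - (\<Sum>i<Suc d. h i) \<ge> 1"
    using i0 by (simp add: sum_subtractf)
  then have "(\<Sum>i<Suc d. h i) - real d \<le> 0" by simp
  then show ?thesis using False by (simp add: relu_def)
qed

lemma main_aux:
  fixes d :: nat and \<tau> :: "(nat \<Rightarrow> real) set"
  assumes asm: "d \<ge> 1 \<and> is_simplex d \<tau>"
  shows "\<exists>k s. real k \<le> 2 * real_of_int \<lceil>log 2 (real d + 1)\<rceil> \<and>
            real s \<le> 2 * (2 * (real d + 1)) \<and> HNN d k s (charfun \<tau>)"
proof -
  have d1: "d \<ge> 1" using asm by simp
  from asm obtain v :: "nat \<Rightarrow> nat \<Rightarrow> real" where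
    vR: "\<forall>i\<le>d. in_Rd d (v i)" and
    ind: "\<forall>c :: nat \<Rightarrow> real. (\<Sum>i\<le>d. c i) = 0 \<and> (\<forall>j<d. (\<Sum>i\<le>d. c i * v i j) = 0)
          \<longrightarrow> (\<forall>i\<le>d. c i = 0)" and
    tau: "\<tau> = {x. in_Rd d x \<and> (\<exists>lam :: nat \<Rightarrow> real. (\<forall>i\<le>d. lam i \<ge> 0) \<and> (\<Sum>i\<le>d. lam i) = 1 \<and>
                 (\<forall>j<d. x j = (\<Sum>i\<le>d. lam i * v i j)))}"
    unfolding is_simplex_def by blast
  define n where "n = Suc d"
  define A :: "real mat" where "A = mat n n (\<lambda>(j,i). if j < d then v i j else 1)"
  have Ac: "A \<in> carrier_mat n n" unfolding A_def by simp
  have mulA: "(A *\<^sub>v c) $ j = (\<Sum>i\<le>d. (if j < d then v i j else 1) * c $ i)"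
    if "j < n" "c \<in> carrier_vec n" for j c
    using that unfolding A_def n_def
    by (simp add: scalar_prod_def lessThan_Suc_atMost[symmetric] atLeast0LessThan)
  have detA: "det A \<noteq> 0"
  proof
    assume "det A = 0"
    then obtain c where c: "c \<in> carrier_vec n" "c \<noteq> 0\<^sub>v n" "A *\<^sub>v c = 0\<^sub>v n"
      using det_0_iff_vec_prod_zero_field[OF Ac] by blast
    have "(\<Sum>i\<le>d. c $ i) = 0"
      using mulA[of d c] c by (simp add: n_def)
    moreover have "\<forall>j<d. (\<Sum>i\<le>d. c $ i * v i j) = 0"
    proof (intro allI impI)
      fix j assume "j < d"
      then show "(\<Sum>i\<le>d. c $ i * v i j) = 0"
        using mulA[of j c] c by (simp add: n_def mult.commute)
    qed
    ultimately have "\<forall>i\<le>d. c $ i = 0" using ind[rule_format, of "\<lambda>i. c $ i"] by blast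
    then have "c = 0\<^sub>v n" using c(1) by (intro eq_vecI) (auto simp: n_def)
    with c(2) show False by simp
  qed
  obtain Bm where Bm: "Bm \<in> carrier_mat n n" "Bm * A = 1\<^sub>m n" "A * Bm = 1\<^sub>m n"
    using det_non_zero_imp_unit[OF Ac detA, of undefined]
    unfolding Units_def ring_mat_def by auto
  define yv where "yv x = vec n (\<lambda>j. if j < d then x j else 1)" for x :: "nat \<Rightarrow> real"
  define lamx where "lamx x = Bm *\<^sub>v yv x" for x
  have yvc: "yv x \<in> carrier_vec n" for x unfolding yv_def by simp
  have lamx_eq: "lamx x $ i = (\<Sum>l<d. Bm $$ (i,l) * x l) + Bm $$ (i,d)" if "i < n" for x i
  proof -
    have "lamx x $ i = (\<Sum>l<Suc d. Bm $$ (i,l) * (yv x) $ l)"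
      using that Bm(1) unfolding lamx_def
      by (simp add: scalar_prod_def yv_def n_def atLeast0LessThan)
    also have "\<dots> = (\<Sum>l<d. Bm $$ (i,l) * x l) + Bm $$ (i,d)"
      by (simp add: yv_def n_def)
    finally show ?thesis .
  qed
  have key: "x \<in> \<tau> \<longleftrightarrow> (\<forall>i\<le>d. lamx x $ i \<ge> 0)" if xR: "in_Rd d x" for x
  proof
    assume "x \<in> \<tau>"
    then obtain lam where lam: "\<forall>i\<le>d. lam i \<ge> 0" "(\<Sum>i\<le>d. lam i) = 1"
      "\<forall>j<d. x j = (\<Sum>i\<le>d. lam i * v i j)" using tau by blast
    define lv where "lv = vec n lam"
    have lvc: "lv \<in> carrier_vec n" unfolding lv_def by simp
    have lvi: "lv $ i = lam i" if "i \<le> d" for i using that by (simp add: lv_def n_def)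
    have "A *\<^sub>v lv = yv x"
    proof (rule eq_vecI)
      fix j assume j: "j < dim_vec (yv x)"
      then have jn: "j < n" by (simp add: yv_def)
      show "(A *\<^sub>v lv) $ j = yv x $ j"
      proof (cases "j < d")
        case True
        then show ?thesis using mulA[OF jn lvc] lam(3) jn
          by (simp add: yv_def lvi mult.commute)
      next
        case False
        then show ?thesis using mulA[OF jn lvc] lam(2) jn
          by (simp add: yv_def lvi)
      qed
    next
      show "dim_vec (A *\<^sub>v lv) = dim_vec (yv x)" using Ac by (simp add: yv_def)
    qed
    then have "lamx x = (Bm * A) *\<^sub>v lv"
      unfolding lamx_def using Bm(1) Ac lvc by (simp add: assoc_mult_mat_vec)
    then have "lamx x = lv" using Bm(2) lvc by simp
    then show "\<forall>i\<le>d. lamx x $ i \<ge> 0" using lam(1) lvi by simp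
  next
    assume pos: "\<forall>i\<le>d. lamx x $ i \<ge> 0"
    have lc: "lamx x \<in> carrier_vec n" unfolding lamx_def using mult_mat_vec_carrier[OF Bm(1) yvc] .
    have "A *\<^sub>v lamx x = (A * Bm) *\<^sub>v yv x"
      unfolding lamx_def using Bm(1) Ac yvc by (simp add: assoc_mult_mat_vec)
    then have Al: "A *\<^sub>v lamx x = yv x" using Bm(3) yvc by simp
    have s1: "(\<Sum>i\<le>d. lamx x $ i) = 1"
      using mulA[of d "lamx x"] lc Al by (simp add: n_def yv_def)
    have s2: "\<forall>j<d. x j = (\<Sum>i\<le>d. lamx x $ i * v i j)"
    proof (intro allI impI)
      fix j assume j: "j < d"
      then have "(A *\<^sub>v lamx x) $ j = yv x $ j" using Al by simp
      then show "x j = (\<Sum>i\<le>d. lamx x $ i * v i j)"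
        using mulA[of j "lamx x"] lc j by (simp add: n_def yv_def mult.commute)
    qed
    show "x \<in> \<tau>" unfolding tau using xR pos s1 s2 by blast
  qed
  define ns :: "nat \<Rightarrow> nat" where "ns = (\<lambda>i. if i = 0 then d else if i = 1 then Suc d else 1)"
  define W :: "nat \<Rightarrow> nat \<Rightarrow> nat \<Rightarrow> real" where
    "W = (\<lambda>t i l. if t = 0 then Bm $$ (i,l) else 1)"
  define B :: "nat \<Rightarrow> nat \<Rightarrow> real" where
    "B = (\<lambda>t i. if t = 0 then Bm $$ (i,d) else if t = 1 then - real d else 0)"
  have evalx: "hnn_eval ns W B 2 x = charfun \<tau> x" if xR: "in_Rd d x" for x
  proof -
    define h where "h i = heaviside (lamx x $ i)" for i
    have h1: "hnn_hidden ns W B 1 x = (\<lambda>i. if i < Suc d then h i else 0)"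
      by (rule ext) (simp add: act_def affmap_def ns_def W_def B_def h_def lamx_eq n_def)
    have "hnn_eval ns W B 2 x = relu ((\<Sum>i<Suc d. h i) - real d)"
      by (simp add: numeral_2_eq_2 hnn_eval_def affmap_def act_def ns_def W_def B_def
          h_def lamx_eq n_def)
    also have "\<dots> = (if \<forall>i<Suc d. h i = 1 then 1 else 0)"
      by (rule relu_sum_ind) (simp add: h_def heaviside_def)
    also have "\<dots> = charfun \<tau> x"
      using key[OF xR] by (auto simp: charfun_def h_def heaviside_def less_Suc_eq_le split: if_splits)
    finally show ?thesis .
  qed
  have lg: "log 2 (real d + 1) > 0" using d1 by simp
  then have cl: "real_of_int \<lceil>log 2 (real d + 1)\<rceil> \<ge> 1"
  proof -
    have "\<lceil>log 2 (real d + 1)\<rceil> > 0" using lg by simp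
    then have "\<lceil>log 2 (real d + 1)\<rceil> \<ge> 1" by simp
    then show ?thesis by simp
  qed
  have "(\<Sum>i\<le>2. ns i) = 2 * d + 2"
    by (simp add: ns_def numeral_2_eq_2)
  then have hnn: "HNN d 2 (2 * d + 2) (charfun \<tau>)"
    unfolding HNN_def using evalx by (intro conjI exI[of _ ns] exI[of _ W] exI[of _ B]) (auto simp: ns_def)
  show ?thesis
    using hnn cl by (intro exI[of _ 2] exI[of _ "2 * d + 2"]) auto
qed

theorem mainTheorem12:
  "\<exists>C :: real. \<forall>d :: nat. \<forall>\<tau>. d \<ge> 1 \<and> is_simplex d \<tau> \<longrightarrow>
     (\<exists>k s. real k \<le> C * real_of_int \<lceil>log 2 (real d + 1)\<rceil> \<and>
            real s \<le> C * (2 * (real d + 1)) \<and>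
            HNN d k s (charfun \<tau>))"
  using main_aux by blast

end
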